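(* Let $(F,\cdot)$ be a scalar group and let $\boxplus$ be an operation such that $(F,\boxplus,\cdot)$ is a left near-field. Then $0$ is the identity element of $(F,\boxplus)$. For every $\alpha\in F$, the additive inverse of $\alpha$ with respect to $\boxplus$ is either $-\alpha$ or $\alpha$, and if it is $\alpha$ (rather than $-\alpha$) then $1\boxplus1=0$. Moreover, $\alpha\cdot(-1)=(-1)\cdot\alpha$ for all $\alpha\in F$.
   Context: A scalar group is a tuple $(F,\cdot,1,0,-1)$ where $(F,\cdot,1)$ is a monoid, $0\ne1$, $0\alpha=\alpha0=0$, $\{1,-1\}$ is exactly the solution set of $x^2=1$, and $(F\setminus\{0\},\cdot)$ is a group; $-\alpha:=(-1)\cdot\alpha$. A left near-field $(F,\boxplus,\cdot)$: $(F,\boxplus)$ a group, $(F\setminus\{0'\},\cdot)$ a group where $0'$ is the $\boxplus$-identity, $0'\cdot\alpha=0'$, and $\gamma(\alpha\boxplus\beta)=\gamma\alpha\boxplus\gamma\beta$. *)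

theory Defs
  imports Main
begin

text \<open>The set F is modelled as the whole type 'a. A scalar group
  (F, mult, one, zero, neg) where neg stands for -1.\<close>

definition scalar_group :: "('a \<Rightarrow> 'a \<Rightarrow> 'a) \<Rightarrow> 'a \<Rightarrow> 'a \<Rightarrow> 'a \<Rightarrow> bool" where
  "scalar_group mult one zero neg \<longleftrightarrow>
     (\<forall>a b c. mult (mult a b) c = mult a (mult b c)) \<and>
     (\<forall>a. mult one a = a \<and> mult a one = a) \<and>
     zero \<noteq> one \<and>
     (\<forall>a. mult zero a = zero \<and> mult a zero = zero) \<and>
     (\<forall>x. mult x x = one \<longleftrightarrow> x = one \<or> x = neg) \<and>
     (\<forall>a b. a \<noteq> zero \<longrightarrow> b \<noteq> zero \<longrightarrow> mult a b \<noteq> zero) \<and>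
     (\<forall>a. a \<noteq> zero \<longrightarrow> (\<exists>b. b \<noteq> zero \<and> mult a b = one \<and> mult b a = one))"

definition left_near_field :: "('a \<Rightarrow> 'a \<Rightarrow> 'a) \<Rightarrow> ('a \<Rightarrow> 'a \<Rightarrow> 'a) \<Rightarrow> bool" where
  "left_near_field add mult \<longleftrightarrow>
     (\<exists>z. (\<forall>a b c. add (add a b) c = add a (add b c)) \<and>
          (\<forall>a. add z a = a \<and> add a z = a) \<and>
          (\<forall>a. \<exists>b. add a b = z \<and> add b a = z) \<and>
          (\<forall>a b. a \<noteq> z \<longrightarrow> b \<noteq> z \<longrightarrow> mult a b \<noteq> z) \<and>
          (\<forall>a b c. a \<noteq> z \<longrightarrow> b \<noteq> z \<longrightarrow> c \<noteq> z \<longrightarrow> mult (mult a b) c = mult a (mult b c)) \<and>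
          (\<exists>e. e \<noteq> z \<and> (\<forall>a. a \<noteq> z \<longrightarrow> mult e a = a \<and> mult a e = a) \<and>
               (\<forall>a. a \<noteq> z \<longrightarrow> (\<exists>b. b \<noteq> z \<and> mult a b = e \<and> mult b a = e))) \<and>
          (\<forall>a. mult z a = z) \<and>
          (\<forall>a b c. mult c (add a b) = add (mult c a) (mult c b)))"

definition is_add_inverse :: "('a \<Rightarrow> 'a \<Rightarrow> 'a) \<Rightarrow> 'a \<Rightarrow> 'a \<Rightarrow> 'a \<Rightarrow> bool" where
  "is_add_inverse add z a b \<longleftrightarrow> add a b = z \<and> add b a = z"

end

theory Submission
  imports Defs
begin

theorem mainTheorem13:
  fixes mult add :: "'a \<Rightarrow> 'a \<Rightarrow> 'a" and one zero neg :: 'a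
  assumes "scalar_group mult one zero neg"
    and "left_near_field add mult"
  shows "(\<forall>a. add zero a = a \<and> add a zero = a) \<and>
         (\<forall>a. is_add_inverse add zero a (mult neg a) \<or> is_add_inverse add zero a a) \<and>
         (\<forall>a. is_add_inverse add zero a a \<and> a \<noteq> mult neg a \<longrightarrow> add one one = zero) \<and>
         (\<forall>a. mult a neg = mult neg a)"
proof -
  have assoc: "\<And>a b c. mult (mult a b) c = mult a (mult b c)"
    and one1: "\<And>a. mult one a = a" and one2: "\<And>a. mult a one = a"
    and zo: "zero \<noteq> one" and z1: "\<And>a. mult zero a = zero" and z2: "\<And>a. mult a zero = zero"
    and sq: "\<And>x. mult x x = one \<longleftrightarrow> x = one \<or> x = neg"
    and inv: "\<And>a. a \<noteq> zero \<Longrightarrow> \<exists>b. b \<noteq> zero \<and> mult a b = one \<and> mult b a = one"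
    using assms(1) unfolding scalar_group_def by auto
  obtain z where aassoc: "\<And>a b c. add (add a b) c = add a (add b c)"
    and zid: "\<And>a. add z a = a \<and> add a z = a"
    and ainv: "\<And>a. \<exists>b. add a b = z \<and> add b a = z"
    and mz: "\<And>a. mult z a = z"
    and dist: "\<And>a b c. mult c (add a b) = add (mult c a) (mult c b)"
    using assms(2) unfolding left_near_field_def by metis
  have zz: "z = zero" using mz[of zero] z2[of z] by simp
  have uniq: "\<And>x a y. add x a = zero \<Longrightarrow> add a y = zero \<Longrightarrow> x = y"
  proof -
    fix x a y assume h: "add x a = zero" "add a y = zero"
    have "x = add x (add a y)" using h zid zz by simp
    also have "\<dots> = add (add x a) y" by (simp add: aassoc)
    also have "\<dots> = y" using h zid zz by simp
    finally show "x = y" .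
  qed
  have c4: "\<forall>a. mult a neg = mult neg a"
  proof
    fix a
    show "mult a neg = mult neg a"
    proof (cases "a = zero")
      case True then show ?thesis using z1 z2 by simp
    next
      case False
      then obtain ai where ai: "mult a ai = one" "mult ai a = one" using inv by blast
      have nn: "mult neg neg = one" using sq by simp
      define c where "c = mult (mult a neg) ai"
      have "mult c c = mult a (mult neg (mult (mult ai a) (mult neg ai)))"
        unfolding c_def by (simp add: assoc)
      also have "\<dots> = one" using ai nn by (simp add: one1 assoc[symmetric])
      finally have "c = one \<or> c = neg" using sq by simp
      have ca: "mult c a = mult a neg" unfolding c_def using ai by (simp add: assoc one2)
      show ?thesis
      proof (cases "c = neg")
        case True then show ?thesis using ca by simp
      next
        case False
        then have "c = one" using \<open>c = one \<or> c = neg\<close> by simp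
        then have "mult a neg = a" using ca one1 by simp
        then have "mult ai (mult a neg) = one" using ai by simp
        then have "neg = one" using ai by (simp add: assoc[symmetric] one1)
        then show ?thesis using one1 one2 by simp
      qed
    qed
  qed
  obtain b where b: "add one b = zero" "add b one = zero" using ainv[of one] zz by blast
  have invb: "\<And>a. add a (mult a b) = zero \<and> add (mult a b) a = zero"
  proof -
    fix a
    have "add a (mult a b) = mult a (add one b)" using dist one2 by simp
    moreover have "add (mult a b) a = mult a (add b one)" using dist one2 by simp
    ultimately show "add a (mult a b) = zero \<and> add (mult a b) a = zero" using b z2 by simp
  qed
  have "one = mult b b" using uniq[OF b(1)] invb[of b] by blast
  then have bc: "b = one \<or> b = neg" using sq[of b] by metis
  have c2: "\<forall>a. is_add_inverse add zero a (mult neg a) \<or> is_add_inverse add zero a a"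
    using bc invb c4 one2 unfolding is_add_inverse_def by metis
  have c3: "\<forall>a. is_add_inverse add zero a a \<and> a \<noteq> mult neg a \<longrightarrow> add one one = zero"
  proof (intro allI impI)
    fix a assume h: "is_add_inverse add zero a a \<and> a \<noteq> mult neg a"
    show "add one one = zero"
    proof (cases "b = one")
      case True then show ?thesis using b by simp
    next
      case False
      then have "b = neg" using bc by simp
      then have "mult a neg = a" using uniq invb[of a] h unfolding is_add_inverse_def by metis
      then show ?thesis using h c4 by simp
    qed
  qed
  show ?thesis using zid zz c2 c3 c4 by simp
qed

end
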